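(* Let $X_n\in L_G^{1^*}(\Omega)$ with $X_n\ge Y$ for all $n\ge1$, where $Y\in\mathbb{L}^1(\Omega)$. Then $\liminf_{n\to\infty}X_n\in\mathcal{L}_G^{1^*_*}(\Omega)$.
   Context: $\Omega=C_0^d(\mathbb{R}^+)$ is the space of continuous paths $\omega:[0,\infty)\to\mathbb{R}^d$ with $\omega_0=0$, $B$ the canonical process, $\hat{\mathbb{E}}$ the $G$-expectation ($G$ a monotone sublinear function on $d\times d$ symmetric matrices). $L^1_G(\Omega)$ is the completion of bounded Lipschitz cylinder functions $\varphi(B_{t_1},\dots,B_{t_n})$ under $\hat{\mathbb{E}}[|\cdot|]$. $\mathcal{P}$ is a weakly compact set of probability measures representing $\hat{\mathbb{E}}$, $\hat{\mathbb{E}}[X]=\sup_{P\in\mathcal{P}}E_P[X]$ for Borel $X$, $c(A)=\sup_{P\in\mathcal{P}}P(A)$, q.s. = outside a capacity-zero set. $L^0(\Omega)$ is the set of Borel maps $\Omega\to[-\infty,\infty]$; $\mathbb{L}^1(\Omega)=\{X\in L^0(\Omega):\hat{\mathbb{E}}[|X|]<\infty\}$; $L_G^{1^*}(\Omega)=\{X\in\mathbb{L}^1(\Omega):\exists X_n\in L^1_G(\Omega),X_n\downarrow X\text{ q.s.}\}$; $\mathcal{L}_G^{1^*_*}(\Omega)=\{X\in L^0(\Omega):\exists X_n\in L_G^{1^*}(\Omega),X_n\uparrow X\text{ q.s.}\}$. *)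

theory Defs
  imports "HOL-Probability.Probability"
begin

text \<open>Paths are represented as total functions real => R^d that are continuous on [0,oo),
  vanish at 0, and are (canonically) 0 for negative times.\<close>

definition Omega :: "(real \<Rightarrow> real ^ 'd) set" where
  "Omega = {\<omega>. continuous_on {0..} \<omega> \<and> \<omega> 0 = 0 \<and> (\<forall>t<0. \<omega> t = 0)}"

text \<open>Metric of locally uniform convergence.\<close>
definition path_dist :: "(real \<Rightarrow> real ^ 'd) \<Rightarrow> (real \<Rightarrow> real ^ 'd) \<Rightarrow> real" where
  "path_dist \<omega>1 \<omega>2 =
     (\<Sum>i. (1/2) ^ Suc i * min 1 (SUP t\<in>{0..real (Suc i)}. norm (\<omega>1 t - \<omega>2 t)))"

definition path_open :: "(real \<Rightarrow> real ^ 'd) set \<Rightarrow> bool" where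
  "path_open U \<longleftrightarrow> U \<subseteq> Omega \<and>
     (\<forall>x\<in>U. \<exists>e>0. \<forall>y\<in>Omega. path_dist x y < e \<longrightarrow> y \<in> U)"

definition path_space :: "(real \<Rightarrow> real ^ 'd) measure" where
  "path_space = sigma Omega {U. path_open U}"

definition path_continuous :: "((real \<Rightarrow> real ^ 'd) \<Rightarrow> real) \<Rightarrow> bool" where
  "path_continuous f \<longleftrightarrow> (\<forall>\<omega>\<in>Omega. \<forall>e>0. \<exists>\<delta>>0. \<forall>\<omega>'\<in>Omega.
      path_dist \<omega> \<omega>' < \<delta> \<longrightarrow> \<bar>f \<omega> - f \<omega>'\<bar> < e)"

definition prob_on_paths :: "(real \<Rightarrow> real ^ 'd) measure \<Rightarrow> bool" where
  "prob_on_paths P \<longleftrightarrow> prob_space P \<and> sets P = sets path_space \<and> space P = Omega"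

definition weak_conv ::
  "(nat \<Rightarrow> (real \<Rightarrow> real ^ 'd) measure) \<Rightarrow> (real \<Rightarrow> real ^ 'd) measure \<Rightarrow> bool" where
  "weak_conv Ps P \<longleftrightarrow> (\<forall>f. path_continuous f \<and> (\<exists>B. \<forall>\<omega>\<in>Omega. \<bar>f \<omega>\<bar> \<le> B) \<longrightarrow>
      (\<lambda>k. integral\<^sup>L (Ps k) f) \<longlonglongrightarrow> integral\<^sup>L P f)"

definition weakly_compact :: "(real \<Rightarrow> real ^ 'd) measure set \<Rightarrow> bool" where
  "weakly_compact \<P> \<longleftrightarrow> (\<forall>Ps. (\<forall>k. Ps k \<in> \<P>) \<longrightarrow>
      (\<exists>(r::nat \<Rightarrow> nat) P. strict_mono r \<and> P \<in> \<P> \<and> weak_conv (Ps \<circ> r) P))"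

definition upper_E_abs :: "(real \<Rightarrow> real ^ 'd) measure set \<Rightarrow> ((real \<Rightarrow> real ^ 'd) \<Rightarrow> ereal) \<Rightarrow> ennreal" where
  "upper_E_abs \<P> X = (SUP P\<in>\<P>. \<integral>\<^sup>+ \<omega>. e2ennreal \<bar>X \<omega>\<bar> \<partial>P)"

definition capacity :: "(real \<Rightarrow> real ^ 'd) measure set \<Rightarrow> (real \<Rightarrow> real ^ 'd) set \<Rightarrow> ennreal" where
  "capacity \<P> A = (SUP P\<in>\<P>. emeasure P A)"

definition quasi_surely :: "(real \<Rightarrow> real ^ 'd) measure set \<Rightarrow> ((real \<Rightarrow> real ^ 'd) \<Rightarrow> bool) \<Rightarrow> bool" where
  "quasi_surely \<P> Q \<longleftrightarrow> (\<exists>N \<in> sets path_space. capacity \<P> N = 0 \<and> (\<forall>\<omega>\<in>Omega - N. Q \<omega>))"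

definition L0 :: "((real \<Rightarrow> real ^ 'd) \<Rightarrow> ereal) set" where
  "L0 = borel_measurable path_space"

definition LL1 :: "(real \<Rightarrow> real ^ 'd) measure set \<Rightarrow> ((real \<Rightarrow> real ^ 'd) \<Rightarrow> ereal) set" where
  "LL1 \<P> = {X \<in> L0. upper_E_abs \<P> X < \<infinity>}"

definition lip_cyl :: "((real \<Rightarrow> real ^ 'd) \<Rightarrow> real) \<Rightarrow> bool" where
  "lip_cyl X \<longleftrightarrow> (\<exists>(n::nat) (ts::nat \<Rightarrow> real) (\<phi>::(nat \<Rightarrow> real ^ 'd) \<Rightarrow> real) L M.
      (\<forall>i<n. 0 \<le> ts i) \<and> (\<forall>x. \<bar>\<phi> x\<bar> \<le> M) \<and>
      (\<forall>x y. \<bar>\<phi> x - \<phi> y\<bar> \<le> L * (\<Sum>i<n. norm (x i - y i))) \<and>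
      X = (\<lambda>\<omega>. \<phi> (\<lambda>i. \<omega> (ts i))))"

text \<open>L^1_G: completion of the Lipschitz cylinder functions under \<^emph>\<open>E\<close>[|.|], realised
  as Borel random variables that are limits of cylinder functions in that seminorm.\<close>
definition L1G :: "(real \<Rightarrow> real ^ 'd) measure set \<Rightarrow> ((real \<Rightarrow> real ^ 'd) \<Rightarrow> ereal) set" where
  "L1G \<P> = {X \<in> L0. \<exists>Xs. (\<forall>n. lip_cyl (Xs n)) \<and>
      (\<lambda>n. upper_E_abs \<P> (\<lambda>\<omega>. X \<omega> - ereal (Xs n \<omega>))) \<longlonglongrightarrow> 0}"

definition L1G_star :: "(real \<Rightarrow> real ^ 'd) measure set \<Rightarrow> ((real \<Rightarrow> real ^ 'd) \<Rightarrow> ereal) set" where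
  "L1G_star \<P> = {X \<in> LL1 \<P>. \<exists>Xs. (\<forall>n. Xs n \<in> L1G \<P>) \<and>
      quasi_surely \<P> (\<lambda>\<omega>. decseq (\<lambda>n. Xs n \<omega>) \<and> (\<lambda>n. Xs n \<omega>) \<longlonglongrightarrow> X \<omega>)}"

definition L1G_star_star :: "(real \<Rightarrow> real ^ 'd) measure set \<Rightarrow> ((real \<Rightarrow> real ^ 'd) \<Rightarrow> ereal) set" where
  "L1G_star_star \<P> = {X \<in> L0. \<exists>Xs. (\<forall>n. Xs n \<in> L1G_star \<P>) \<and>
      quasi_surely \<P> (\<lambda>\<omega>. incseq (\<lambda>n. Xs n \<omega>) \<and> (\<lambda>n. Xs n \<omega>) \<longlonglongrightarrow> X \<omega>)}"

end

theory Submission imports Defs begin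
lemma e2_add: assumes "0 \<le> (a::ereal)" "0 \<le> b" shows "e2ennreal (a + b) = e2ennreal a + e2ennreal b"
proof -
  have "enn2ereal (e2ennreal a + e2ennreal b) = a + b"
    by (simp add: plus_ennreal.rep_eq enn2ereal_e2ennreal assms)
  then show ?thesis by (metis e2ennreal_enn2ereal)
qed

lemma sup_bdd:
  fixes x y :: "real \<Rightarrow> real ^ 'd"
  assumes "x \<in> Omega" "y \<in> Omega"
  shows "bdd_above ((\<lambda>t. norm (x t - y t)) ` {0..c})"
proof -
  have "continuous_on {0..c} (\<lambda>t. norm (x t - y t))"
    using assms unfolding Omega_def
    by (intro continuous_intros; auto intro: continuous_on_subset)
  then show ?thesis
    by (intro bounded_imp_bdd_above compact_imp_bounded compact_continuous_image) auto
qed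

lemma path_dist_bound:
  fixes x y :: "real \<Rightarrow> real ^ 'd"
  assumes "x \<in> Omega" "y \<in> Omega" "0 \<le> t" "t \<le> real (Suc k)"
  shows "min 1 (norm (x t - y t)) \<le> 2 ^ Suc k * path_dist x y"
proof -
  define S where "S i = (SUP t\<in>{0..real (Suc i)}. norm (x t - y t))" for i
  define g where "g i = (1/2::real) ^ Suc i * min 1 (S i)" for i
  have le: "norm (x s - y s) \<le> S i" if "s \<in> {0..real (Suc i)}" for s i
    unfolding S_def using sup_bdd[OF assms(1,2)] that by (intro cSUP_upper) auto
  have S0: "0 \<le> S i" for i using le[of 0 i] by (smt (verit) atLeastAtMost_iff norm_ge_zero of_nat_0_le_iff)
  have g0: "0 \<le> g i" for i unfolding g_def using S0[of i] by simp
  have g1: "g i \<le> (1/2) ^ Suc i" for i unfolding g_def by (simp add: mult_left_le)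
  have sg: "summable g"
    by (rule summable_comparison_test[where g="\<lambda>i. (1/2::real) ^ Suc i"]) (use g0 g1 in auto)
  have pd: "path_dist x y = suminf g" unfolding path_dist_def g_def S_def by simp
  have "g k \<le> suminf g" using sum_le_suminf[OF sg, of "{k}"] g0 by simp
  moreover have "min 1 (norm (x t - y t)) \<le> min 1 (S k)" using le[of t k] assms by auto
  moreover have "min 1 (S k) = 2 ^ Suc k * g k" unfolding g_def by (simp add: power_one_over)
  ultimately show ?thesis using pd by (smt (verit) mult_left_mono zero_le_power)
qed

lemma path_space_sets: "path_open U \<Longrightarrow> U \<in> sets path_space" unfolding path_space_def
  by (subst sets_measure_of) (auto simp: path_open_def)

lemma space_path_space: "space path_space = Omega"
  unfolding path_space_def by (simp add: space_measure_of_conv)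

lemma lip_cyl_cont:
  fixes f :: "(real \<Rightarrow> real ^ 'd) \<Rightarrow> real"
  assumes "lip_cyl f" "x \<in> Omega" "e > 0"
  shows "\<exists>\<delta>>0. \<forall>y\<in>Omega. path_dist x y < \<delta> \<longrightarrow> \<bar>f x - f y\<bar> < e"
proof -
  obtain n :: nat and ts :: "nat \<Rightarrow> real" and \<phi> :: "(nat \<Rightarrow> real ^ 'd) \<Rightarrow> real" and L :: real where ts: "\<forall>i<n. 0 \<le> ts i"
    and lip: "\<forall>x y. \<bar>\<phi> x - \<phi> y\<bar> \<le> L * (\<Sum>i<n. norm (x i - (y i :: real ^ 'd)))"
    and f: "f = (\<lambda>\<omega>. \<phi> (\<lambda>i. \<omega> (ts i)))"
    using assms(1) unfolding lip_cyl_def by blast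
  define k where "k = nat \<lceil>\<Sum>i<n. ts i\<rceil>"
  have tk: "ts i \<le> real (Suc k)" if "i < n" for i
  proof -
    have "ts i \<le> (\<Sum>i<n. ts i)" using ts that by (intro member_le_sum) auto
    also have "\<dots> \<le> real k" unfolding k_def by linarith
    finally show ?thesis by simp
  qed
  define C where "C = (\<bar>L\<bar> + 1) * (real n + 1) * 2 ^ Suc k"
  have C0: "C > 0" unfolding C_def by (intro mult_pos_pos) auto
  define \<delta> where "\<delta> = min ((1/2) ^ Suc k) (e / C)"
  have d0: "\<delta> > 0" unfolding \<delta>_def using C0 assms(3) by simp
  show ?thesis
  proof (intro exI[of _ \<delta>] conjI ballI impI d0)
    fix y assume y: "y \<in> Omega" and d: "path_dist x y < \<delta>"
    let ?d = "path_dist x y"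
    have nb: "norm (x (ts i) - y (ts i)) \<le> 2 ^ Suc k * ?d" if "i < n" for i
    proof -
      have b: "min 1 (norm (x (ts i) - y (ts i))) \<le> 2 ^ Suc k * ?d"
        using path_dist_bound[OF assms(2) y, of "ts i" k] ts tk that by auto
      have "2 ^ Suc k * ?d < 2 ^ Suc k * (1/2) ^ Suc k"
        using d unfolding \<delta>_def by (intro mult_strict_left_mono) auto
      also have "\<dots> = 1" by (simp add: power_one_over)
      finally show ?thesis using b by linarith
    qed
    have "\<bar>f x - f y\<bar> \<le> L * (\<Sum>i<n. norm (x (ts i) - y (ts i)))" using lip f by simp
    also have "\<dots> \<le> \<bar>L\<bar> * (\<Sum>i<n. norm (x (ts i) - y (ts i)))"
      by (intro mult_right_mono) (auto intro: sum_nonneg)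
    also have "\<dots> \<le> \<bar>L\<bar> * (\<Sum>i<n. 2 ^ Suc k * ?d)"
      using nb by (intro mult_left_mono sum_mono) auto
    also have "\<dots> = \<bar>L\<bar> * real n * 2 ^ Suc k * ?d" by simp
    also have "\<dots> \<le> C * ?d"
    proof -
      have "min 1 (norm (x 0 - y 0)) \<le> 2 ^ Suc 0 * ?d"
        by (rule path_dist_bound[OF assms(2) y]) auto
      moreover have "x 0 = 0" "y 0 = 0" using assms(2) y unfolding Omega_def by auto
      ultimately have d00: "0 \<le> ?d" by simp
      have "\<bar>L\<bar> * real n \<le> (\<bar>L\<bar> + 1) * (real n + 1)" by (simp add: mult_mono)
      then show ?thesis unfolding C_def using d00
        by (intro mult_right_mono) (auto intro: mult_right_mono)
    qed
    also have "\<dots> < C * (e / C)" using d unfolding \<delta>_def using C0 by (intro mult_strict_left_mono) auto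
    also have "\<dots> = e" using C0 by simp
    finally show "\<bar>f x - f y\<bar> < e" .
  qed
qed

lemma lip_cyl_meas:
  fixes f :: "(real \<Rightarrow> real ^ 'd) \<Rightarrow> real"
  assumes "lip_cyl f"
  shows "f \<in> borel_measurable path_space"
proof (rule borel_measurableI)
  fix S :: "real set" assume S: "open S"
  have "path_open (f -` S \<inter> Omega)"
    unfolding path_open_def
  proof (intro conjI ballI)
    fix x assume x: "x \<in> f -` S \<inter> Omega"
    then obtain e where e: "e > 0" "ball (f x) e \<subseteq> S" using S open_contains_ball by blast
    obtain \<delta> where "\<delta> > 0" "\<forall>y\<in>Omega. path_dist x y < \<delta> \<longrightarrow> \<bar>f x - f y\<bar> < e"
      using lip_cyl_cont[OF assms _ e(1)] x by blast
    then show "\<exists>e>0. \<forall>y\<in>Omega. path_dist x y < e \<longrightarrow> y \<in> f -` S \<inter> Omega"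
      using e(2) by (intro exI[of _ \<delta>]) (auto simp: dist_real_def subset_iff)
  qed auto
  then show "f -` S \<inter> space path_space \<in> sets path_space"
    using path_space_sets space_path_space by metis
qed

lemma meas_P:
  assumes "prob_on_paths P" "f \<in> borel_measurable path_space"
  shows "f \<in> borel_measurable P"
  using assms unfolding prob_on_paths_def using measurable_cong_sets by blast

lemma upper_sub:
  fixes f g h :: "(real \<Rightarrow> real ^ 'd) \<Rightarrow> ereal"
  assumes P: "\<forall>P\<in>\<P>. prob_on_paths P"
    and m: "f \<in> borel_measurable path_space" "g \<in> borel_measurable path_space"
    and le: "\<forall>\<omega>\<in>Omega. \<bar>h \<omega>\<bar> \<le> \<bar>f \<omega>\<bar> + \<bar>g \<omega>\<bar>"
  shows "upper_E_abs \<P> h \<le> upper_E_abs \<P> f + upper_E_abs \<P> g"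
  unfolding upper_E_abs_def
proof (rule SUP_least)
  fix P assume PP: "P \<in> \<P>"
  have pp: "prob_on_paths P" using P PP by auto
  then have sp: "space P = Omega" unfolding prob_on_paths_def by auto
  have mf: "f \<in> borel_measurable P" "g \<in> borel_measurable P" using meas_P[OF pp] m by auto
  have "(\<integral>\<^sup>+ \<omega>. e2ennreal \<bar>h \<omega>\<bar> \<partial>P) \<le> (\<integral>\<^sup>+ \<omega>. e2ennreal \<bar>f \<omega>\<bar> + e2ennreal \<bar>g \<omega>\<bar> \<partial>P)"
    using le sp by (intro nn_integral_mono) (auto simp: e2_add[symmetric] intro!: e2ennreal_mono)
  also have "\<dots> = (\<integral>\<^sup>+ \<omega>. e2ennreal \<bar>f \<omega>\<bar> \<partial>P) + (\<integral>\<^sup>+ \<omega>. e2ennreal \<bar>g \<omega>\<bar> \<partial>P)"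
    using mf by (intro nn_integral_add) auto
  also have "\<dots> \<le> (SUP P\<in>\<P>. \<integral>\<^sup>+ \<omega>. e2ennreal \<bar>f \<omega>\<bar> \<partial>P) + (SUP P\<in>\<P>. \<integral>\<^sup>+ \<omega>. e2ennreal \<bar>g \<omega>\<bar> \<partial>P)"
    using PP by (intro add_mono SUP_upper) auto
  finally show "(\<integral>\<^sup>+ \<omega>. e2ennreal \<bar>h \<omega>\<bar> \<partial>P) \<le> \<dots>" .
qed

lemma ab1: "\<bar>min (x::ereal) y - ereal (min a b)\<bar> \<le> \<bar>x - ereal a\<bar> + \<bar>y - ereal b\<bar>"
  by (cases x; cases y) (auto simp: min_def abs_real_def split: if_splits)

lemma lip_cyl_min:
  assumes "lip_cyl f" "lip_cyl g"
  shows "lip_cyl (\<lambda>\<omega>. min (f \<omega>) (g \<omega>))"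
proof -
  obtain n :: nat and ts :: "nat \<Rightarrow> real" and \<phi> :: "(nat \<Rightarrow> real ^ 'a) \<Rightarrow> real" and L :: real and M
    where ts: "\<forall>i<n. 0 \<le> ts i" and M: "\<forall>x. \<bar>\<phi> x\<bar> \<le> M"
    and lip: "\<forall>x y. \<bar>\<phi> x - \<phi> y\<bar> \<le> L * (\<Sum>i<n. norm (x i - (y i :: real ^ 'a)))"
    and f: "f = (\<lambda>\<omega>. \<phi> (\<lambda>i. \<omega> (ts i)))"
    using assms(1) unfolding lip_cyl_def by blast
  obtain n' :: nat and ts' :: "nat \<Rightarrow> real" and \<psi> :: "(nat \<Rightarrow> real ^ 'a) \<Rightarrow> real" and L' :: real and M'
    where ts': "\<forall>i<n'. 0 \<le> ts' i" and M': "\<forall>x. \<bar>\<psi> x\<bar> \<le> M'"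
    and lip': "\<forall>x y. \<bar>\<psi> x - \<psi> y\<bar> \<le> L' * (\<Sum>i<n'. norm (x i - (y i :: real ^ 'a)))"
    and g: "g = (\<lambda>\<omega>. \<psi> (\<lambda>i. \<omega> (ts' i)))"
    using assms(2) unfolding lip_cyl_def by blast
  define T where "T i = (if i < n then ts i else ts' (i - n))" for i
  define HH where "HH x = min (\<phi> (\<lambda>i. if i < n then x i else 0)) (\<psi> (\<lambda>i. x (i + n)))" for x :: "nat \<Rightarrow> real ^ 'a"
  have red: "\<phi> x = \<phi> y" if "\<forall>i<n. x i = y i" for x y
    using lip[rule_format, of x y] that by simp
  have "\<forall>i<n + n'. 0 \<le> T i" using ts ts' unfolding T_def by auto
  moreover have "\<forall>x. \<bar>HH x\<bar> \<le> max M M'"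
  proof
    fix x :: "nat \<Rightarrow> real ^ 'a"
    have "\<bar>\<phi> (\<lambda>i. if i < n then x i else 0)\<bar> \<le> M" "\<bar>\<psi> (\<lambda>i. x (i + n))\<bar> \<le> M'" using M M' by auto
    then show "\<bar>HH x\<bar> \<le> max M M'" unfolding HH_def by (auto simp: min_def max_def abs_real_def split: if_splits)
  qed
  moreover have "\<forall>x y. \<bar>HH x - HH y\<bar> \<le> (\<bar>L\<bar> + \<bar>L'\<bar>) * (\<Sum>i<n + n'. norm (x i - y i))"
  proof (intro allI)
    fix x y :: "nat \<Rightarrow> real ^ 'a"
    let ?s = "\<Sum>i<n + n'. norm (x i - y i)"
    have s0: "0 \<le> ?s" by (auto intro: sum_nonneg)
    have s1: "(\<Sum>i<n. norm (x i - y i)) \<le> ?s"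
      by (intro sum_mono2) auto
    have s2: "(\<Sum>i<n'. norm (x (i + n) - y (i + n))) \<le> ?s"
    proof -
      have "(\<Sum>i<n'. norm (x (i + n) - y (i + n))) = (\<Sum>i\<in>{n..<n+n'}. norm (x i - y i))"
        by (rule sum.reindex_bij_witness[of _ "\<lambda>i. i - n" "\<lambda>i. i + n"]) auto
      also have "\<dots> \<le> ?s" by (intro sum_mono2) auto
      finally show ?thesis .
    qed
    have a: "\<bar>\<phi> (\<lambda>i. if i < n then x i else 0) - \<phi> (\<lambda>i. if i < n then y i else 0)\<bar> \<le> \<bar>L\<bar> * ?s"
    proof -
      have "\<bar>\<phi> (\<lambda>i. if i < n then x i else 0) - \<phi> (\<lambda>i. if i < n then y i else 0)\<bar>
          \<le> L * (\<Sum>i<n. norm (x i - y i))" using lip[rule_format, of "\<lambda>i. if i < n then x i else 0" "\<lambda>i. if i < n then y i else 0"] by simp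
      also have "\<dots> \<le> \<bar>L\<bar> * (\<Sum>i<n. norm (x i - y i))" by (intro mult_right_mono) (auto intro: sum_nonneg)
      also have "\<dots> \<le> \<bar>L\<bar> * ?s" using s1 by (intro mult_left_mono) auto
      finally show ?thesis .
    qed
    have b: "\<bar>\<psi> (\<lambda>i. x (i + n)) - \<psi> (\<lambda>i. y (i + n))\<bar> \<le> \<bar>L'\<bar> * ?s"
    proof -
      have "\<bar>\<psi> (\<lambda>i. x (i + n)) - \<psi> (\<lambda>i. y (i + n))\<bar> \<le> L' * (\<Sum>i<n'. norm (x (i + n) - y (i + n)))"
        using lip'[rule_format, of "\<lambda>i. x (i + n)" "\<lambda>i. y (i + n)"] by simp
      also have "\<dots> \<le> \<bar>L'\<bar> * (\<Sum>i<n'. norm (x (i + n) - y (i + n)))" by (intro mult_right_mono) (auto intro: sum_nonneg)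
      also have "\<dots> \<le> \<bar>L'\<bar> * ?s" using s2 by (intro mult_left_mono) auto
      finally show ?thesis .
    qed
    show "\<bar>HH x - HH y\<bar> \<le> (\<bar>L\<bar> + \<bar>L'\<bar>) * ?s" unfolding HH_def using a b
      by (simp add: distrib_right)
  qed
  moreover have "(\<lambda>\<omega>. min (f \<omega>) (g \<omega>)) = (\<lambda>\<omega>. HH (\<lambda>i. \<omega> (T i)))"
  proof
    fix \<omega> :: "real \<Rightarrow> real ^ 'a"
    have "\<phi> (\<lambda>i. if i < n then \<omega> (T i) else 0) = \<phi> (\<lambda>i. \<omega> (ts i))" by (rule red) (auto simp: T_def)
    then show "min (f \<omega>) (g \<omega>) = HH (\<lambda>i. \<omega> (T i))" unfolding HH_def f g T_def by simp
  qed
  ultimately show ?thesis unfolding lip_cyl_def by blast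
qed

lemma L1G_min:
  fixes X X' :: "(real \<Rightarrow> real ^ 'd) \<Rightarrow> ereal"
  assumes P: "\<forall>P\<in>\<P>. prob_on_paths P"
    and X: "X \<in> L1G \<P>" and X': "X' \<in> L1G \<P>"
  shows "(\<lambda>\<omega>. min (X \<omega>) (X' \<omega>)) \<in> L1G \<P>"
proof -
  obtain Xs where Xs: "\<forall>n. lip_cyl (Xs n)"
    "(\<lambda>n. upper_E_abs \<P> (\<lambda>\<omega>. X \<omega> - ereal (Xs n \<omega>))) \<longlonglongrightarrow> 0" and XL: "X \<in> L0"
    using X unfolding L1G_def by blast
  obtain Xs' where Xs': "\<forall>n. lip_cyl (Xs' n)"
    "(\<lambda>n. upper_E_abs \<P> (\<lambda>\<omega>. X' \<omega> - ereal (Xs' n \<omega>))) \<longlonglongrightarrow> 0" and XL': "X' \<in> L0"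
    using X' unfolding L1G_def by blast
  define Zs where "Zs n = (\<lambda>\<omega>. min (Xs n \<omega>) (Xs' n \<omega>))" for n
  have Zl: "\<forall>n. lip_cyl (Zs n)" unfolding Zs_def using Xs Xs' by (simp add: lip_cyl_min)
  have mX: "X \<in> borel_measurable path_space" "X' \<in> borel_measurable path_space"
    using XL XL' unfolding L0_def by auto
  have mXs: "(\<lambda>\<omega>. ereal (Xs n \<omega>)) \<in> borel_measurable path_space"
    "(\<lambda>\<omega>. ereal (Xs' n \<omega>)) \<in> borel_measurable path_space" for n
    using borel_measurable_ereal[OF lip_cyl_meas] Xs(1) Xs'(1) by auto
  have bnd: "upper_E_abs \<P> (\<lambda>\<omega>. min (X \<omega>) (X' \<omega>) - ereal (Zs n \<omega>))
      \<le> upper_E_abs \<P> (\<lambda>\<omega>. X \<omega> - ereal (Xs n \<omega>)) + upper_E_abs \<P> (\<lambda>\<omega>. X' \<omega> - ereal (Xs' n \<omega>))" for n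
  proof (rule upper_sub[OF P])
    show "(\<lambda>\<omega>. X \<omega> - ereal (Xs n \<omega>)) \<in> borel_measurable path_space"
      by (rule borel_measurable_ereal_diff[OF mX(1) mXs(1)])
    show "(\<lambda>\<omega>. X' \<omega> - ereal (Xs' n \<omega>)) \<in> borel_measurable path_space"
      by (rule borel_measurable_ereal_diff[OF mX(2) mXs(2)])
    show "\<forall>\<omega>\<in>Omega. \<bar>min (X \<omega>) (X' \<omega>) - ereal (Zs n \<omega>)\<bar> \<le> \<bar>X \<omega> - ereal (Xs n \<omega>)\<bar> + \<bar>X' \<omega> - ereal (Xs' n \<omega>)\<bar>"
      unfolding Zs_def using ab1 by blast
  qed
  have "(\<lambda>n. upper_E_abs \<P> (\<lambda>\<omega>. min (X \<omega>) (X' \<omega>) - ereal (Zs n \<omega>))) \<longlonglongrightarrow> 0"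
  proof (rule tendsto_sandwich[of "\<lambda>_. 0" _ _ "\<lambda>n. upper_E_abs \<P> (\<lambda>\<omega>. X \<omega> - ereal (Xs n \<omega>)) + upper_E_abs \<P> (\<lambda>\<omega>. X' \<omega> - ereal (Xs' n \<omega>))"])
    show "((\<lambda>n. upper_E_abs \<P> (\<lambda>\<omega>. X \<omega> - ereal (Xs n \<omega>)) + upper_E_abs \<P> (\<lambda>\<omega>. X' \<omega> - ereal (Xs' n \<omega>))) \<longlongrightarrow> 0) sequentially"
      using tendsto_add[OF Xs(2) Xs'(2)] by simp
    show "\<forall>\<^sub>F n in sequentially. (0::ennreal) \<le> upper_E_abs \<P> (\<lambda>\<omega>. min (X \<omega>) (X' \<omega>) - ereal (Zs n \<omega>))"
      by simp
    show "\<forall>\<^sub>F n in sequentially. upper_E_abs \<P> (\<lambda>\<omega>. min (X \<omega>) (X' \<omega>) - ereal (Zs n \<omega>)) \<le> upper_E_abs \<P> (\<lambda>\<omega>. X \<omega> - ereal (Xs n \<omega>)) + upper_E_abs \<P> (\<lambda>\<omega>. X' \<omega> - ereal (Xs' n \<omega>))"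
      using bnd by (intro always_eventually) blast
  qed simp
  moreover have "(\<lambda>\<omega>. min (X \<omega>) (X' \<omega>)) \<in> L0" using mX unfolding L0_def by (intro borel_measurable_min)
  ultimately show ?thesis unfolding L1G_def using Zl by (intro CollectI conjI exI[of _ Zs]) auto
qed

fun minfold :: "(nat \<Rightarrow> 'a \<Rightarrow> ereal) \<Rightarrow> nat \<Rightarrow> nat \<Rightarrow> 'a \<Rightarrow> ereal" where
  "minfold F n 0 = F n"
| "minfold F n (Suc k) = (\<lambda>\<omega>. min (minfold F n k \<omega>) (F (n + Suc k) \<omega>))"

lemma minfold_L1G:
  assumes P: "\<forall>P\<in>\<P>. prob_on_paths P" and F: "\<forall>m. F m \<in> L1G \<P>"
  shows "minfold F n k \<in> L1G \<P>"
  by (induction k) (auto simp: F L1G_min[OF P])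

lemma minfold_le: "n \<le> m \<Longrightarrow> m \<le> n + k \<Longrightarrow> minfold F n k \<omega> \<le> F m \<omega>"
proof (induction k)
  case 0 then show ?case by simp
next
  case (Suc k)
  show ?case
  proof (cases "m = n + Suc k")
    case True then show ?thesis by simp
  next
    case False then have "m \<le> n + k" using Suc.prems by simp
    then show ?thesis using Suc by (simp add: min.coboundedI1)
  qed
qed

lemma minfold_ge: "(\<And>m. n \<le> m \<Longrightarrow> m \<le> n + k \<Longrightarrow> c \<le> F m \<omega>) \<Longrightarrow> c \<le> minfold F n k \<omega>"
  by (induction k) auto

lemma minfold_mono: "(\<And>m. G m \<omega> \<le> F m \<omega>) \<Longrightarrow> minfold G n k \<omega> \<le> minfold F n k \<omega>"
  by (induction k) (auto simp: min.coboundedI1 min.coboundedI2)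

lemma minfold_Suc_le: "minfold F n (Suc k) \<omega> \<le> minfold F n k \<omega>"
  by simp

lemma cap_zero_le:
  assumes "capacity \<P> N = 0" "P \<in> \<P>"
  shows "emeasure P N = 0"
  using assms unfolding capacity_def by (metis SUP_upper le_zero_eq)

lemma cap_UN:
  fixes N :: "nat \<Rightarrow> (real \<Rightarrow> real ^ 'd) set"
  assumes P: "\<forall>P\<in>\<P>. prob_on_paths P"
    and N: "\<And>m. N m \<in> sets path_space" "\<And>m. capacity \<P> (N m) = 0"
  shows "capacity \<P> (\<Union>m. N m) = 0"
proof -
  have "emeasure P (\<Union>m. N m) = 0" if PP: "P \<in> \<P>" for P
  proof -
    have s: "sets P = sets path_space" using P PP unfolding prob_on_paths_def by auto
    have "N m \<in> null_sets P" for m using N cap_zero_le[OF N(2) PP] s by (auto simp: null_sets_def)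
    then have "(\<Union>m. N m) \<in> null_sets P" by auto
    then show ?thesis by auto
  qed
  then show ?thesis unfolding capacity_def by (metis (mono_tags, lifting) SUP_bot_conv(2) bot_ennreal)
qed

lemma ab2: "(y::ereal) \<le> z \<Longrightarrow> z \<le> x \<Longrightarrow> \<bar>z\<bar> \<le> \<bar>y\<bar> + \<bar>x\<bar>"
  by (cases x; cases y; cases z) auto

theorem proposition3p20:
  fixes \<P> :: "(real \<Rightarrow> real ^ 'd) measure set"
    and X :: "nat \<Rightarrow> (real \<Rightarrow> real ^ 'd) \<Rightarrow> ereal"
    and Y :: "(real \<Rightarrow> real ^ 'd) \<Rightarrow> ereal"
  assumes P_nonempty: "\<P> \<noteq> {}"
    and P_prob: "\<forall>P\<in>\<P>. prob_on_paths P"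
    and P_wc: "weakly_compact \<P>"
    and X_in: "\<forall>n. X n \<in> L1G_star \<P>"
    and Y_in: "Y \<in> LL1 \<P>"
    and X_ge: "\<forall>n. \<forall>\<omega>\<in>Omega. Y \<omega> \<le> X n \<omega>"
  shows "(\<lambda>\<omega>. liminf (\<lambda>n. X n \<omega>)) \<in> L1G_star_star \<P>"
proof -
  have ex: "\<forall>m. \<exists>A N. (\<forall>j. A j \<in> L1G \<P>) \<and> N \<in> sets path_space \<and> capacity \<P> N = 0 \<and>
      (\<forall>\<omega>\<in>Omega - N. decseq (\<lambda>j. A j \<omega>) \<and> (\<lambda>j. A j \<omega>) \<longlonglongrightarrow> X m \<omega>)"
    using X_in unfolding L1G_star_def quasi_surely_def by blast
  then obtain A N where AN: "\<And>m. (\<forall>j. A m j \<in> L1G \<P>)" "\<And>m. N m \<in> sets path_space"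
    "\<And>m. capacity \<P> (N m) = 0"
    "\<And>m \<omega>. \<omega> \<in> Omega - N m \<Longrightarrow> decseq (\<lambda>j. A m j \<omega>) \<and> (\<lambda>j. A m j \<omega>) \<longlonglongrightarrow> X m \<omega>"
    by metis
  define NN where "NN = (\<Union>m. N m)"
  have NN: "NN \<in> sets path_space" "capacity \<P> NN = 0"
    unfolding NN_def using AN(2) cap_UN[OF P_prob AN(2,3)] by auto
  have mX: "X m \<in> borel_measurable path_space" for m
    using X_in unfolding L1G_star_def LL1_def L0_def by auto
  have mY: "Y \<in> borel_measurable path_space" using Y_in unfolding LL1_def L0_def by auto
  define Z where "Z n = (\<lambda>\<omega>. INF m\<in>{n..}. X m \<omega>)" for n
  define W where "W n j = minfold (\<lambda>m. A m j) n j" for n j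
  have Z_L1G_star: "Z n \<in> L1G_star \<P>" for n
  proof -
    have mZ: "Z n \<in> borel_measurable path_space" unfolding Z_def
      by (rule borel_measurable_INF) (auto simp: mX)
    have ZY: "Y \<omega> \<le> Z n \<omega>" if "\<omega> \<in> Omega" for \<omega>
      unfolding Z_def using X_ge that by (auto intro: INF_greatest)
    have ZX: "Z n \<omega> \<le> X n \<omega>" for \<omega> unfolding Z_def by (auto intro: INF_lower)
    have "upper_E_abs \<P> (Z n) \<le> upper_E_abs \<P> Y + upper_E_abs \<P> (X n)"
      by (rule upper_sub[OF P_prob mY mX]) (use ZY ZX ab2 in blast)
    moreover have "upper_E_abs \<P> Y < \<infinity>" using Y_in unfolding LL1_def by auto
    moreover have "upper_E_abs \<P> (X n) < \<infinity>" using X_in unfolding L1G_star_def LL1_def by auto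
    ultimately have fin: "upper_E_abs \<P> (Z n) < \<infinity>"
      by (metis (no_types, lifting) ennreal_add_less_top infinity_ennreal_def order_le_less_trans)
    have WL: "\<forall>j. W n j \<in> L1G \<P>" unfolding W_def using AN(1) by (auto intro!: minfold_L1G[OF P_prob])
    have conv: "decseq (\<lambda>j. W n j \<omega>) \<and> (\<lambda>j. W n j \<omega>) \<longlonglongrightarrow> Z n \<omega>" if w: "\<omega> \<in> Omega - NN" for \<omega>
    proof -
      have wm: "\<omega> \<in> Omega - N m" for m using w unfolding NN_def by auto
      have dec: "decseq (\<lambda>j. W n j \<omega>)"
      proof (rule decseq_SucI)
        fix j
        have "W n (Suc j) \<omega> \<le> minfold (\<lambda>m. A m (Suc j)) n j \<omega>"
          unfolding W_def by (rule minfold_Suc_le)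
        also have "\<dots> \<le> minfold (\<lambda>m. A m j) n j \<omega>"
          by (rule minfold_mono) (use AN(4)[OF wm] in \<open>auto simp: decseq_Suc_iff\<close>)
        finally show "W n (Suc j) \<omega> \<le> W n j \<omega>" unfolding W_def .
      qed
      have AX: "X m \<omega> \<le> A m j \<omega>" for m j using AN(4)[OF wm] decseq_ge by blast
      have lower: "Z n \<omega> \<le> W n j \<omega>" for j
        unfolding W_def
      proof (rule minfold_ge)
        fix m assume "n \<le> m"
        then have "Z n \<omega> \<le> X m \<omega>" unfolding Z_def by (auto intro: INF_lower)
        then show "Z n \<omega> \<le> A m j \<omega>" using AX order_trans by blast
      qed
      have lim: "(\<lambda>j. W n j \<omega>) \<longlonglongrightarrow> (INF j. W n j \<omega>)" by (rule LIMSEQ_INF[OF dec])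
      have "(INF j. W n j \<omega>) \<le> X m \<omega>" if "m \<in> {n..}" for m
      proof (rule LIMSEQ_le_const[OF conjunct2[OF AN(4)[OF wm]]])
        show "\<exists>N. \<forall>j\<ge>N. (INF j. W n j \<omega>) \<le> A m j \<omega>"
        proof (intro exI allI impI)
          fix j assume "m \<le> j"
          have "(INF j. W n j \<omega>) \<le> W n j \<omega>" by (rule INF_lower) simp
          also have "\<dots> \<le> A m j \<omega>" unfolding W_def
            by (rule minfold_le) (use that \<open>m \<le> j\<close> in auto)
          finally show "(INF j. W n j \<omega>) \<le> A m j \<omega>" .
        qed
      qed
      then have "(INF j. W n j \<omega>) \<le> Z n \<omega>" unfolding Z_def by (auto intro: INF_greatest)
      moreover have "Z n \<omega> \<le> (INF j. W n j \<omega>)" using lower by (auto intro: INF_greatest)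
      ultimately have "(INF j. W n j \<omega>) = Z n \<omega>" by simp
      then show ?thesis using dec lim by simp
    qed
    show ?thesis unfolding L1G_star_def LL1_def L0_def quasi_surely_def
      using mZ fin WL conv NN by blast
  qed
  have inc: "incseq (\<lambda>n. Z n \<omega>)" for \<omega>
    unfolding Z_def by (rule incseq_SucI) (auto intro: INF_superset_mono)
  have limZ: "(\<lambda>n. Z n \<omega>) \<longlonglongrightarrow> liminf (\<lambda>n. X n \<omega>)" for \<omega>
    unfolding liminf_SUP_INF using LIMSEQ_SUP[OF inc[of \<omega>]] unfolding Z_def by simp
  have cap0: "capacity \<P> {} = 0" unfolding capacity_def by (metis (mono_tags, lifting) SUP_bot_conv(2) bot_ennreal emeasure_empty)
  have "(\<lambda>\<omega>. liminf (\<lambda>n. X n \<omega>)) \<in> L0" unfolding L0_def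
    by (rule borel_measurable_liminf) (rule mX)
  moreover have "quasi_surely \<P> (\<lambda>\<omega>. incseq (\<lambda>n. Z n \<omega>) \<and> (\<lambda>n. Z n \<omega>) \<longlonglongrightarrow> liminf (\<lambda>n. X n \<omega>))"
    unfolding quasi_surely_def using cap0 inc limZ by (intro bexI[of _ "{}"]) auto
  ultimately show ?thesis unfolding L1G_star_star_def using Z_L1G_star by blast
qed
end
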